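(* Let $n$ be a non-negative integer and $r\in\mathbb{C}\setminus\mathbb{Z}^{-}$, $r\neq0$. Then \[ \sum_{k=1}^{n}(-1)^{k-1}\frac{\binom{n}{k}}{\binom{k+r}{r}}H_k^2=\frac{1}{n+r}(H_{n+r}-H_r)(rH_r-1)+\frac{n}{(n+r)^2}\left(H_r-\frac1r\right)+\frac{r}{n+r}H_nH_{n+r-1}-r\sum_{k=1}^{n}\frac{H_{n-k+r-1}}{k(n-k+r)}. \] In particular, \[ \sum_{k=1}^{n}(-1)^{k-1}\frac{\binom{n}{k}}{k+1}H_k^2=\frac{1}{2(n+1)}\left(3H_n^{(2)}-H_n^2\right). \]
   Context: $\mathbb{Z}^{-}$ denotes the set of negative integers. For complex $z$ not a negative integer, $H_z=\psi(z+1)+\gamma$ ($\psi$ the digamma function, $\gamma$ Euler's constant); for integers $m\ge0$, $H_m=\sum_{j=1}^m1/j$ and $H_m^{(2)}=\sum_{j=1}^m1/j^2$. Binomial coefficients with complex entries: $\binom{x}{y}=\frac{\Gamma(x+1)}{\Gamma(y+1)\Gamma(x-y+1)}$. *)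

theory Defs
  imports "HOL-Analysis.Analysis"
begin

definition Hc :: "complex \<Rightarrow> complex" where
  "Hc z = Digamma (z + 1) + euler_mascheroni"

definition harm2 :: "nat \<Rightarrow> 'a::real_normed_field" where
  "harm2 m = (\<Sum>j=1..m. inverse (of_nat j ^ 2))"

definition cbinom :: "complex \<Rightarrow> complex \<Rightarrow> complex" where
  "cbinom x y = Gamma (x + 1) / (Gamma (y + 1) * Gamma (x - y + 1))"

end

theory Submission
  imports Defs
begin


definition PP :: "'a::real_normed_field \<Rightarrow> nat \<Rightarrow> 'a" where
  "PP r k = pochhammer (r+1) k / fact k"

definition AA :: "'a::real_normed_field \<Rightarrow> (nat \<Rightarrow> 'a) \<Rightarrow> nat \<Rightarrow> 'a" where
  "AA r g n = (\<Sum>k=0..n. (-1)^k * of_nat (n choose k) * g k / PP r k)"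

definition good :: "'a::real_normed_field \<Rightarrow> bool" where
  "good r \<longleftrightarrow> (\<forall>m::nat. r + of_nat m \<noteq> 0)"

lemma PP_nz: assumes "good r" shows "PP r k \<noteq> 0"
proof
  assume "PP r k = 0"
  then have "pochhammer (r+1) k = 0" by (simp add: PP_def)
  then obtain i where "i < k" "r + 1 = - of_nat i" by (auto simp: pochhammer_eq_0_iff)
  then have "r + of_nat (Suc i) = 0" by (simp add: of_nat_Suc add.assoc[symmetric])
  with assms show False unfolding good_def by blast
qed

lemma PP_0 [simp]: "PP r 0 = 1" by (simp add: PP_def)

lemma PP_Suc: "PP r (Suc k) = PP r k * (r + of_nat (Suc k)) / of_nat (Suc k)"
  unfolding PP_def pochhammer_Suc fact_Suc of_nat_mult of_nat_Suc
  by (simp add: add_ac)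


lemma good_nz: "good r \<Longrightarrow> r + of_nat m \<noteq> 0"
  by (auto simp: good_def)

lemma good_nz': "good r \<Longrightarrow> of_nat m + r \<noteq> 0"
  by (auto simp: good_def add.commute)

lemma AA_add: "AA r (\<lambda>j. f j + g j) n = AA r f n + AA r g n"
  unfolding AA_def sum.distrib[symmetric] by (rule sum.cong) (simp_all add: ring_distribs add_divide_distrib)

lemma AA_diff: "AA r (\<lambda>j. f j - g j) n = AA r f n - AA r g n"
  unfolding AA_def sum_subtractf[symmetric] by (rule sum.cong) (simp_all add: ring_distribs diff_divide_distrib)

lemma AA_cmult: "AA r (\<lambda>j. a * f j) n = a * AA r f n"
  unfolding AA_def sum_distrib_left by (rule sum.cong) (simp_all add: mult_ac)

lemma AA_cong: "(\<And>j. j \<le> n \<Longrightarrow> f j = g j) \<Longrightarrow> AA r f n = AA r g n"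
  unfolding AA_def by (rule sum.cong) auto

lemma aux_div: "P \<noteq> 0 \<Longrightarrow> x \<noteq> 0 \<Longrightarrow> a / (P * x / s) * x = a * s / (P::'a::field)"
  by (cases "s = 0") (simp_all add: field_simps)

lemma choose_shift: "Suc i * (n choose Suc i) = (n - i) * (n choose i)"
  by (metis binomial_absorb_comp binomial_absorption)

lemma AA_L:
  fixes r :: "'a::real_normed_field"
  assumes "good r"
  shows "(of_nat n + r) * AA r g n =
         AA r (\<lambda>j. (of_nat j + r) * (g j - (if j = 0 then 0 else g (j - 1)))) n"
proof -
  define c where "c k = (-1)^k * of_nat (n choose k) / PP r k" for k
  define G where "G k = (if k = 0 then 0 else g (k - 1))" for k
  have nz: "\<And>k. PP r k \<noteq> 0" using PP_nz[OF assms] .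
  have R: "AA r (\<lambda>j. (of_nat j + r) * (g j - G j)) n =
        (\<Sum>k=0..n. c k * (of_nat k + r) * g k) - (\<Sum>k=0..n. c k * (of_nat k + r) * G k)"
    unfolding AA_def c_def sum_subtractf[symmetric]
    by (rule sum.cong) (auto simp: field_simps nz)
  have S2: "(\<Sum>k=0..n. c k * (of_nat k + r) * G k) = - (\<Sum>k=0..n. c k * of_nat (n - k) * g k)"
  proof (cases n)
    case 0
    then show ?thesis by (simp add: G_def)
  next
    case (Suc m)
    have "(\<Sum>k=0..n. c k * (of_nat k + r) * G k) = (\<Sum>k=Suc 0..Suc m. c k * (of_nat k + r) * G k)"
      by (simp add: Suc sum.atLeast_Suc_atMost G_def)
    also have "\<dots> = (\<Sum>i=0..m. c (Suc i) * (of_nat (Suc i) + r) * g i)"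
      by (simp only: sum.shift_bounds_cl_Suc_ivl) (simp add: G_def)
    also have "\<dots> = (\<Sum>i=0..m. - (c i * of_nat (n - i) * g i))"
    proof (rule sum.cong[OF refl])
      fix i assume "i \<in> {0..m}"
      have e: "of_nat (Suc i) * of_nat (n choose Suc i) = (of_nat (n - i) * of_nat (n choose i) :: 'a)"
        using choose_shift[of i n] by (metis of_nat_mult)
      have xnz: "r + of_nat (Suc i) \<noteq> 0" using good_nz[OF assms] .
      have snz: "of_nat (Suc i) \<noteq> (0::'a)" by (rule of_nat_neq_0)
      have xc: "of_nat (Suc i) + r = r + of_nat (Suc i)" by (simp add: add.commute)
      have "c (Suc i) * (of_nat (Suc i) + r) = (-1)^Suc i * of_nat (n choose Suc i) /
             (PP r i * (r + of_nat (Suc i)) / of_nat (Suc i)) * (r + of_nat (Suc i))"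
        unfolding c_def PP_Suc xc ..
      also have "\<dots> = - ((-1)^i * (of_nat (Suc i) * of_nat (n choose Suc i)) / PP r i)"
        using aux_div[OF nz[of i] xnz, of "(-1)^Suc i * of_nat (n choose Suc i)" "of_nat (Suc i)"]
        by (simp del: of_nat_Suc)
      also have "\<dots> = - (c i * of_nat (n - i))"
        unfolding e c_def by (simp add: field_simps)
      finally show "c (Suc i) * (of_nat (Suc i) + r) * g i = - (c i * of_nat (n - i) * g i)"
        by simp
    qed
    also have "\<dots> = - (\<Sum>k=0..n. c k * of_nat (n - k) * g k)"
      by (simp add: Suc sum_negf)
    finally show ?thesis .
  qed
  have L: "(of_nat n + r) * AA r g n =
        (\<Sum>k=0..n. c k * (of_nat k + r) * g k) + (\<Sum>k=0..n. c k * of_nat (n - k) * g k)"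
    unfolding AA_def sum_distrib_left sum.distrib[symmetric]
  proof (rule sum.cong[OF refl])
    fix k assume "k \<in> {0..n}"
    then have "of_nat n = (of_nat k + of_nat (n - k) :: 'a)" by (simp flip: of_nat_add)
    then show "(of_nat n + r) * ((-1)^k * of_nat (n choose k) * g k / PP r k) =
          c k * (of_nat k + r) * g k + c k * of_nat (n - k) * g k"
      unfolding c_def using nz[of k] by (simp add: field_simps)
  qed
  show ?thesis using R S2 L by (simp add: G_def)
qed


lemma AA_ext: "AA r f n = (\<Sum>k=0..Suc n. (-1)^k * of_nat (n choose k) * f k / PP r k)"
  by (simp add: AA_def)

lemma AA_D_step:
  fixes r :: "'a::real_normed_field"
  assumes "g 0 = 0"
  shows "AA r (\<lambda>j. g j / of_nat j) (Suc n) = AA r (\<lambda>j. g j / of_nat j) n + AA r g (Suc n) / of_nat (Suc n)"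
proof -
  have ext: "AA r (\<lambda>j. g j / of_nat j) n = (\<Sum>k=0..Suc n. (-1)^k * of_nat (n choose k) * (g k / of_nat k) / PP r k)"
    by (simp add: AA_def)
  have "AA r (\<lambda>j. g j / of_nat j) (Suc n) - AA r (\<lambda>j. g j / of_nat j) n =
        (\<Sum>k=0..Suc n. (-1)^k * of_nat (Suc n choose k) * g k / PP r k / of_nat (Suc n))"
    unfolding ext unfolding AA_def sum_subtractf[symmetric]
  proof (rule sum.cong[OF refl])
    fix k assume "k \<in> {0..Suc n}"
    show "(-1)^k * of_nat (Suc n choose k) * (g k / of_nat k) / PP r k -
          (-1)^k * of_nat (n choose k) * (g k / of_nat k) / PP r k =
          (-1)^k * of_nat (Suc n choose k) * g k / PP r k / of_nat (Suc n)"
    proof (cases k)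
      case 0
      then show ?thesis using assms by simp
    next
      case (Suc i)
      have e: "of_nat (Suc i) * of_nat (Suc n choose Suc i) = (of_nat (Suc n) * of_nat (n choose i) :: 'a)"
        using binomial_absorption[of i "Suc n"] by (metis diff_Suc_1 of_nat_mult)
      have snz: "of_nat (Suc i) \<noteq> (0::'a)" "of_nat (Suc n) \<noteq> (0::'a)" by (rule of_nat_neq_0)+
      have d: "of_nat (Suc n choose Suc i) - of_nat (n choose Suc i) = (of_nat (n choose i) :: 'a)"
        by simp
      have "(-1)^k * of_nat (Suc n choose k) * (g k / of_nat k) / PP r k -
          (-1)^k * of_nat (n choose k) * (g k / of_nat k) / PP r k =
          (-1)^k * (of_nat (Suc n choose Suc i) - of_nat (n choose Suc i)) * (g k / of_nat (Suc i)) / PP r k"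
        unfolding Suc by (simp only: diff_divide_distrib[symmetric] left_diff_distrib right_diff_distrib)
      also have "\<dots> = (-1)^k * of_nat (n choose i) * g k / of_nat (Suc i) / PP r k"
        unfolding d by simp
      also have "\<dots> = (-1)^k * (of_nat (Suc i) * of_nat (Suc n choose Suc i)) * g k / (of_nat (Suc n) * of_nat (Suc i)) / PP r k"
        unfolding e using snz by (simp del: of_nat_Suc add: field_simps)
      also have "\<dots> = (-1)^k * of_nat (Suc n choose k) * g k / PP r k / of_nat (Suc n)"
        unfolding Suc using snz by (simp del: of_nat_Suc binomial_Suc_Suc add: mult_ac)
      finally show ?thesis .
    qed
  qed
  also have "\<dots> = AA r g (Suc n) / of_nat (Suc n)"
    unfolding AA_def sum_divide_distrib ..
  finally show ?thesis by (simp add: algebra_simps)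
qed

lemma AA_D:
  fixes r :: "'a::real_normed_field"
  assumes "g 0 = 0"
  shows "AA r (\<lambda>j. g j / of_nat j) n = (\<Sum>m=1..n. AA r g m / of_nat m)"
proof (induction n)
  case 0
  then show ?case by (simp add: AA_def)
next
  case (Suc n)
  then show ?case using AA_D_step[where g=g and r=r and n=n, OF assms] by simp
qed




lemma solve_lin: "x \<noteq> 0 \<Longrightarrow> x * a = b \<Longrightarrow> a = b / (x::'a::field)"
  by (simp add: field_simps)

lemma cancel_aux: "(- m / x) / m = - 1 / (x::'a::field) \<or> m = 0"
  by (cases "x = 0"; cases "m = 0") (simp_all add: field_simps)

lemma AA_delta0: "AA r (\<lambda>j. if j = 0 then a else 0) n = a"
proof -
  have "AA r (\<lambda>j. if j = 0 then a else 0) n =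
     (-1)^0 * of_nat (n choose 0) * a / PP r 0 + (\<Sum>k=Suc 0..n. (-1)^k * of_nat (n choose k) * (if k = 0 then a else 0) / PP r k)"
    unfolding AA_def by (subst sum.atLeast_Suc_atMost) auto
  also have "(\<Sum>k=Suc 0..n. (-1)^k * of_nat (n choose k) * (if k = 0 then a else 0) / PP r k) = 0"
    by (rule sum.neutral) auto
  finally show ?thesis by simp
qed

lemma F1:
  fixes r :: "'a::real_normed_field"
  assumes "good r"
  shows "AA r (\<lambda>_. 1) n = r / (of_nat n + r)"
proof -
  have "(of_nat n + r) * AA r (\<lambda>_. 1) n = AA r (\<lambda>j. if j = 0 then r else 0) n"
    unfolding AA_L[OF assms] by (rule AA_cong) auto
  then have "(of_nat n + r) * AA r (\<lambda>_. 1) n = r" by (simp add: AA_delta0)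
  then show ?thesis using good_nz'[OF assms, of n] by (rule solve_lin[rotated])
qed

lemma F_ind:
  fixes r :: "'a::real_normed_field"
  assumes "good r"
  shows "AA r (\<lambda>j. if j = 0 then 0 else 1) n = - of_nat n / (of_nat n + r)"
proof -
  have "AA r (\<lambda>j. if j = 0 then 0 else 1) n = AA r (\<lambda>j. 1 - (if j = 0 then 1 else 0)) n"
    by (rule AA_cong) auto
  also have "\<dots> = r / (of_nat n + r) - 1"
    unfolding AA_diff F1[OF assms] AA_delta0 ..
  also have "\<dots> = - of_nat n / (of_nat n + r)"
    using good_nz'[OF assms, of n] by (simp add: field_simps)
  finally show ?thesis .
qed

definition uu :: "'a::real_normed_field \<Rightarrow> nat \<Rightarrow> 'a" where
  "uu r n = (\<Sum>m=1..n. 1 / (of_nat m + r))"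

lemma F2:
  fixes r :: "'a::real_normed_field"
  assumes "good r"
  shows "AA r (\<lambda>j. 1 / of_nat j) n = - uu r n"
proof -
  have "AA r (\<lambda>j. 1 / of_nat j) n = AA r (\<lambda>j. (if j = 0 then 0 else 1) / of_nat j) n"
    by (rule AA_cong) auto
  also have "\<dots> = (\<Sum>m=1..n. AA r (\<lambda>j. if j = 0 then 0 else 1) m / of_nat m)"
    by (rule AA_D) simp
  also have "\<dots> = (\<Sum>m=1..n. - (1 / (of_nat m + r)))"
  proof (rule sum.cong[OF refl])
    fix m assume "m \<in> {1..n}"
    then have "of_nat m \<noteq> (0::'a)" by simp
    then show "AA r (\<lambda>j. if j = 0 then 0 else 1) m / of_nat m = - (1 / (of_nat m + r))"
      unfolding F_ind[OF assms] using cancel_aux[of "of_nat m :: 'a" "of_nat m + r"] by auto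
  qed
  finally show ?thesis by (simp add: uu_def sum_negf)
qed

definition AH :: "'a::real_normed_field \<Rightarrow> nat \<Rightarrow> 'a" where
  "AH r n = (- of_nat n / (of_nat n + r) - r * uu r n) / (of_nat n + r)"

lemma F3:
  fixes r :: "'a::real_normed_field"
  assumes "good r"
  shows "AA r harm n = AH r n"
proof -
  have "(of_nat n + r) * AA r harm n =
        AA r (\<lambda>j. (if j = 0 then 0 else 1) + r * (1 / of_nat j)) n"
    unfolding AA_L[OF assms]
  proof (rule AA_cong)
    fix j :: nat
    show "(of_nat j + r) * (harm j - (if j = 0 then 0 else harm (j - 1))) =
          (if j = 0 then 0 else 1) + r * (1 / of_nat j)"
    proof (cases j)
      case 0 then show ?thesis by (simp add: harm_def)
    next
      case (Suc i)
      have "of_nat (Suc i) \<noteq> (0::'a)" by (rule of_nat_neq_0)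
      then show ?thesis unfolding Suc by (simp add: harm_Suc field_simps del: of_nat_Suc)
    qed
  qed
  also have "\<dots> = - of_nat n / (of_nat n + r) - r * uu r n"
    unfolding AA_add AA_cmult F_ind[OF assms] F2[OF assms] by simp
  finally show ?thesis unfolding AH_def using good_nz'[OF assms, of n] by (rule solve_lin[rotated])
qed

lemma F4:
  fixes r :: "'a::real_normed_field"
  assumes "good r"
  shows "AA r (\<lambda>j. 1 / of_nat j ^ 2) n = - (\<Sum>m=1..n. uu r m / of_nat m)"
proof -
  have "AA r (\<lambda>j. 1 / of_nat j ^ 2) n = AA r (\<lambda>j. (1 / of_nat j) / of_nat j) n"
    by (rule AA_cong) (simp add: power2_eq_square)
  also have "\<dots> = (\<Sum>m=1..n. AA r (\<lambda>j. 1 / of_nat j) m / of_nat m)"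
    by (rule AA_D) simp
  also have "\<dots> = - (\<Sum>m=1..n. uu r m / of_nat m)"
    unfolding F2[OF assms] by (simp add: sum_negf)
  finally show ?thesis .
qed

lemma F5:
  fixes r :: "'a::real_normed_field"
  assumes "good r"
  shows "AA r (\<lambda>j. harm j / of_nat j) n = (\<Sum>m=1..n. AH r m / of_nat m)"
  unfolding AA_D[where g=harm, OF harm_expand(1)] F3[OF assms] ..

lemma F6:
  fixes r :: "'a::real_normed_field"
  assumes "good r"
  shows "(of_nat n + r) * AA r (\<lambda>j. harm j ^ 2) n =
     2 * AH r n + 2 * r * (\<Sum>m=1..n. AH r m / of_nat m) + uu r n + r * (\<Sum>m=1..n. uu r m / of_nat m)"
proof -
  have "(of_nat n + r) * AA r (\<lambda>j. harm j ^ 2) n =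
        AA r (\<lambda>j. 2 * harm j + (2 * r) * (harm j / of_nat j) - 1 * (1 / of_nat j) - r * (1 / of_nat j ^ 2)) n"
    unfolding AA_L[OF assms]
  proof (rule AA_cong)
    fix j :: nat
    show "(of_nat j + r) * (harm j ^ 2 - (if j = 0 then 0 else harm (j - 1) ^ 2)) =
          2 * harm j + (2 * r) * (harm j / of_nat j) - 1 * (1 / of_nat j) - r * (1 / of_nat j ^ 2)"
    proof (cases j)
      case 0 then show ?thesis by (simp add: harm_def)
    next
      case (Suc i)
      have "of_nat (Suc i) \<noteq> (0::'a)" by (rule of_nat_neq_0)
      then show ?thesis unfolding Suc by (simp add: harm_Suc field_simps power2_eq_square del: of_nat_Suc)
    qed
  qed
  also have "\<dots> = 2 * AH r n + 2 * r * (\<Sum>m=1..n. AH r m / of_nat m) + uu r n + r * (\<Sum>m=1..n. uu r m / of_nat m)"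
    unfolding AA_diff AA_add AA_cmult F3[OF assms] F5[OF assms] F2[OF assms] F4[OF assms] by simp
  finally show ?thesis .
qed




lemma step_poly:
  fixes r x K0 Kn Hn a b c d :: "'a::field"
  assumes "r * a = 1" "(x + r) * b = 1" "(x + 1 + r) * c = 1" "(x + 1) * d = 1"
  shows "- (2 * ((- (x+1) * c - r * (Kn + b + c - (K0 + a))) * c)
            - 2 * ((- x * b - r * (Kn + b - (K0 + a))) * b)
            + 2 * r * (((- (x+1) * c - r * (Kn + b + c - (K0 + a))) * c) * d)
            + c + r * (Kn + b + c - (K0 + a)) * d)
   = c * (r * (K0 + a) - 1) + ((x+1) * c - x * b) * (K0 + a - a)
     + r * ((Hn + d) * (Kn + b) - Hn * Kn)
     - r * (K0 * d + (Hn + Kn - K0) * b + Kn * b)"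
  using assms by algebra

lemma pf: "a \<noteq> 0 \<Longrightarrow> b \<noteq> 0 \<Longrightarrow> a + b \<noteq> 0 \<Longrightarrow> 1 / (a * b) = (1 / a + 1 / b) / (a + b::'a::field)"
proof -
  assume a: "a \<noteq> 0" and b: "b \<noteq> 0" and ab: "a + b \<noteq> 0"
  have "1 / a + 1 / b = (a + b) / (a * b)" using a b by (simp add: field_simps)
  then show ?thesis using ab by simp
qed

locale Kseq =
  fixes r :: "'a::real_normed_field" and K :: "nat \<Rightarrow> 'a"
  assumes gd: "good r"
    and Kstep: "\<And>m. K (Suc m) = K m + 1 / (r + of_nat m)"
begin

lemma r_nz: "r \<noteq> 0" using good_nz[OF gd, of 0] by simp

lemma uu_K: "uu r m = K (Suc m) - K 1"
proof (induction m)
  case 0 then show ?case by (simp add: uu_def)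
next
  case (Suc m)
  have "uu r (Suc m) = uu r m + 1 / (of_nat (Suc m) + r)" by (simp add: uu_def)
  also have "\<dots> = K (Suc (Suc m)) - K 1" using Suc Kstep[of "Suc m"] by (simp add: add.commute)
  finally show ?case .
qed

lemma K_sum: "K n = K 0 + (\<Sum>j<n. 1 / (r + of_nat j))"
  by (induction n) (simp_all add: Kstep)

definition Xa :: "nat \<Rightarrow> 'a" where "Xa n = (\<Sum>k=1..n. K (n - k) / of_nat k)"
definition Xb :: "nat \<Rightarrow> 'a" where "Xb n = (\<Sum>k=1..n. K (n - k) / (of_nat (n - k) + r))"

lemma rev_sum: fixes f :: "nat \<Rightarrow> 'b::comm_monoid_add" shows "(\<Sum>k=1..n. f (n - k)) = (\<Sum>j<n. f j)"
  using sum.atLeastLessThan_rev_at_least_Suc_atMost[of f 0 n] by (simp add: atLeast0LessThan)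

lemma Xb_Suc: "Xb (Suc n) = Xb n + K n / (of_nat n + r)"
  unfolding Xb_def rev_sum[of "\<lambda>j. K j / (of_nat j + r)"] by simp

lemma inner_sum: "(\<Sum>k=1..n. 1 / (of_nat k * (r + of_nat (n - k)))) = (harm n + K n - K 0) / (of_nat n + r)"
proof -
  have nz: "of_nat n + r \<noteq> 0" using good_nz'[OF gd] .
  have "(\<Sum>k=1..n. 1 / (of_nat k * (r + of_nat (n - k)))) =
        (\<Sum>k=1..n. (1 / of_nat k + 1 / (r + of_nat (n - k))) / (of_nat n + r))"
  proof (rule sum.cong[OF refl])
    fix k assume k: "k \<in> {1..n}"
    have e: "of_nat k + (r + of_nat (n - k)) = (of_nat n + r :: 'a)"
      using k by (simp add: of_nat_diff algebra_simps)
    have kz: "of_nat k \<noteq> (0::'a)" using k by simp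
    have mz: "r + of_nat (n - k) \<noteq> 0" using good_nz[OF gd] .
    show "1 / (of_nat k * (r + of_nat (n - k))) = (1 / of_nat k + 1 / (r + of_nat (n - k))) / (of_nat n + r)"
      using pf[OF kz mz] nz unfolding e by simp
  qed
  also have "\<dots> = ((\<Sum>k=1..n. 1 / of_nat k) + (\<Sum>k=1..n. 1 / (r + of_nat (n - k)))) / (of_nat n + r)"
    by (simp only: sum_divide_distrib[symmetric] sum.distrib)
  also have "(\<Sum>k=1..n. 1 / of_nat k) = (harm n :: 'a)"
    by (simp add: harm_def inverse_eq_divide)
  also have "(\<Sum>k=1..n. 1 / (r + of_nat (n - k))) = K n - K 0"
    unfolding rev_sum[of "\<lambda>j. 1 / (r + of_nat j)"] K_sum[of n] by simp
  finally show ?thesis by (simp add: add_diff_eq)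
qed

lemma Xa_Suc: "Xa (Suc n) = Xa n + K 0 / (of_nat n + 1) + (harm n + K n - K 0) / (of_nat n + r)"
proof -
  have "Xa (Suc n) = (\<Sum>k=1..n. K (Suc n - k) / of_nat k) + K 0 / of_nat (Suc n)"
    unfolding Xa_def by simp
  also have "(\<Sum>k=1..n. K (Suc n - k) / of_nat k) =
     (\<Sum>k=1..n. K (n - k) / of_nat k + 1 / (of_nat k * (r + of_nat (n - k))))"
  proof (rule sum.cong[OF refl])
    fix k assume k: "k \<in> {1..n}"
    then have "Suc n - k = Suc (n - k)" by auto
    then show "K (Suc n - k) / of_nat k = K (n - k) / of_nat k + 1 / (of_nat k * (r + of_nat (n - k)))"
      by (simp add: Kstep add_divide_distrib)
  qed
  also have "\<dots> = Xa n + (harm n + K n - K 0) / (of_nat n + r)"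
    unfolding sum.distrib inner_sum Xa_def ..
  finally show ?thesis by (simp add: add_ac)
qed

lemma E: "- (2 * AH r n + 2 * r * (\<Sum>m=1..n. AH r m / of_nat m) + uu r n + r * (\<Sum>m=1..n. uu r m / of_nat m))
   = (K (Suc n) - K 1) * (r * K 1 - 1) + of_nat n / (of_nat n + r) * (K 1 - 1 / r)
     + r * harm n * K n - r * (Xa n + Xb n)"
proof (induction n)
  case 0
  then show ?case by (simp add: AH_def uu_def Xa_def Xb_def harm_expand(1))
next
  case (Suc n)
  define x where "x = (of_nat n :: 'a)"
  define a where "a = 1 / r"
  define b where "b = 1 / (x + r)"
  define c where "c = 1 / (x + 1 + r)"
  define d where "d = 1 / (x + 1)"
  define SA where "SA = (\<Sum>m=1..n. AH r m / of_nat m)"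
  define SU where "SU = (\<Sum>m=1..n. uu r m / of_nat m)"
  have rz: "r \<noteq> 0" by (rule r_nz)
  have xr: "x + r \<noteq> 0" unfolding x_def by (rule good_nz'[OF gd])
  have x1r: "x + 1 + r \<noteq> 0" unfolding x_def using good_nz'[OF gd, of "Suc n"] by (simp add: add_ac)
  have x1: "x + 1 \<noteq> 0" unfolding x_def using of_nat_neq_0[of n, where 'a='a] by (simp add: add_ac)
  have ha: "r * a = 1" unfolding a_def using rz by simp
  have hb: "(x + r) * b = 1" unfolding b_def using xr by simp
  have hc: "(x + 1 + r) * c = 1" unfolding c_def using x1r by simp
  have hd: "(x + 1) * d = 1" unfolding d_def using x1 by simp
  have sn: "of_nat (Suc n) = x + 1" unfolding x_def by simp
  have K1: "K 1 = K 0 + a" using Kstep[of 0] unfolding a_def by simp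
  have KS: "K (Suc n) = K n + b" using Kstep[of n] unfolding b_def x_def by (simp add: add.commute)
  have KSS: "K (Suc (Suc n)) = K n + b + c" using Kstep[of "Suc n"] KS unfolding c_def x_def by (simp add: add_ac)
  have uun: "uu r n = K n + b - (K 0 + a)" using uu_K[of n] KS K1 by simp
  have uuS: "uu r (Suc n) = K n + b + c - (K 0 + a)" using uu_K[of "Suc n"] KSS K1 by simp
  have AHn: "AH r n = (- x * b - r * uu r n) * b" unfolding AH_def b_def x_def by (simp add: divide_inverse)
  have AHS: "AH r (Suc n) = (- (x + 1) * c - r * uu r (Suc n)) * c"
    unfolding AH_def c_def sn by (simp add: divide_inverse)
  have SAS: "(\<Sum>m=1..Suc n. AH r m / of_nat m) = SA + AH r (Suc n) * d"
    unfolding SA_def d_def sn[symmetric] by (simp add: divide_inverse)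
  have SUS: "(\<Sum>m=1..Suc n. uu r m / of_nat m) = SU + uu r (Suc n) * d"
    unfolding SU_def d_def sn[symmetric] by (simp add: divide_inverse)
  have HS: "harm (Suc n) = harm n + d" unfolding d_def sn[symmetric] by (simp add: harm_Suc inverse_eq_divide)
  have XaS: "Xa (Suc n) = Xa n + K 0 * d + (harm n + K n - K 0) * b"
    unfolding Xa_Suc d_def b_def x_def by (simp add: divide_inverse)
  have XbS: "Xb (Suc n) = Xb n + K n * b"
    unfolding Xb_Suc b_def x_def by (simp add: divide_inverse)
  have f1: "of_nat (Suc n) / (of_nat (Suc n) + r) = (x + 1) * c" unfolding sn c_def by (simp add: divide_inverse)
  have f0: "of_nat n / (of_nat n + r) = x * b" unfolding b_def x_def by (simp add: divide_inverse)
  have f2: "1 / r = a" unfolding a_def ..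
  have IH: "- (2 * AH r n + 2 * r * SA + uu r n + r * SU)
     = (K (Suc n) - K 1) * (r * K 1 - 1) + x * b * (K 1 - a) + r * harm n * K n - r * (Xa n + Xb n)"
    using Suc.IH unfolding SA_def SU_def f0 f2 .
  have st: "- (2 * ((- (x+1) * c - r * (K n + b + c - (K 0 + a))) * c)
            - 2 * ((- x * b - r * (K n + b - (K 0 + a))) * b)
            + 2 * r * (((- (x+1) * c - r * (K n + b + c - (K 0 + a))) * c) * d)
            + c + r * (K n + b + c - (K 0 + a)) * d)
   = c * (r * (K 0 + a) - 1) + ((x+1) * c - x * b) * (K 0 + a - a)
     + r * ((harm n + d) * (K n + b) - harm n * K n)
     - r * (K 0 * d + (harm n + K n - K 0) * b + K n * b)"
    by (rule step_poly[OF ha hb hc hd])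
  show ?case
    unfolding SAS SUS HS XaS XbS f1 f2
    unfolding AHS AHn uuS uun KSS KS K1
    using IH st unfolding AHn uun KS K1
    by algebra
qed

end




lemma good_complex:
  fixes r :: complex
  assumes "r \<notin> {- of_nat m | m. m \<ge> 1}" and "r \<noteq> 0"
  shows "good r"
  unfolding good_def
proof
  fix m :: nat
  show "r + of_nat m \<noteq> 0"
  proof
    assume h: "r + of_nat m = 0"
    show False
    proof (cases m)
      case 0 then show False using h assms(2) by simp
    next
      case (Suc i)
      have "r = - of_nat m" using h by (simp only: eq_neg_iff_add_eq_0)
      moreover have "m \<ge> 1" using Suc by simp
      ultimately show False using assms(1) by blast
    qed
  qed
qed

lemma cbinom_PP:
  assumes "good r"
  shows "cbinom (of_nat k + r) r = PP r k"
proof -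
  have np: "r + 1 \<notin> \<int>\<^sub>\<le>\<^sub>0"
  proof
    assume "r + 1 \<in> \<int>\<^sub>\<le>\<^sub>0"
    then obtain m where "r + 1 = - of_nat m" by (rule nonpos_Ints_cases')
    then have "r + of_nat (Suc m) = 0" by (simp add: algebra_simps eq_neg_iff_add_eq_0)
    with assms show False unfolding good_def by blast
  qed
  have "pochhammer (r + 1) k = Gamma (r + 1 + of_nat k) / Gamma (r + 1)"
    by (rule pochhammer_Gamma[OF np])
  moreover have "Gamma (of_nat k + 1) = (fact k :: complex)"
    using Gamma_fact[of k] by (simp add: add.commute)
  ultimately show ?thesis
    unfolding cbinom_def PP_def by (simp add: add_ac)
qed

lemma LHS_AA:
  fixes r :: "'a::real_normed_field"
  shows "(\<Sum>k=1..n. (-1) ^ (k - 1) * of_nat (n choose k) / PP r k * harm k ^ 2)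
       = - AA r (\<lambda>j. harm j ^ 2) n"
proof -
  have "AA r (\<lambda>j. harm j ^ 2) n = (\<Sum>k=Suc 0..n. (-1)^k * of_nat (n choose k) * harm k ^ 2 / PP r k)"
    unfolding AA_def by (subst sum.atLeast_Suc_atMost) (auto simp: harm_expand(1))
  also have "\<dots> = - (\<Sum>k=1..n. (-1) ^ (k - 1) * of_nat (n choose k) / PP r k * harm k ^ 2)"
    unfolding sum_negf[symmetric]
  proof (rule sum.cong)
    fix k assume "k \<in> {1..n}"
    then obtain i where "k = Suc i" by (cases k) auto
    then show "(-1)^k * of_nat (n choose k) * harm k ^ 2 / PP r k =
      - ((-1) ^ (k - 1) * of_nat (n choose k) / PP r k * harm k ^ 2)" by simp
  qed simp
  finally show ?thesis by simp
qed

lemma Hc_step: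
  fixes r :: complex
  assumes "good r"
  shows "Hc (r - 1 + of_nat (Suc m)) = Hc (r - 1 + of_nat m) + 1 / (r + of_nat m)"
proof -
  have nz: "r + of_nat m \<noteq> 0" using good_nz[OF assms] .
  have "Hc (r - 1 + of_nat (Suc m)) = Digamma ((r + of_nat m) + 1) + euler_mascheroni"
    unfolding Hc_def by (simp add: algebra_simps)
  also have "\<dots> = Digamma (r + of_nat m) + 1 / (r + of_nat m) + euler_mascheroni"
    using Digamma_plus1[OF nz] by simp
  also have "\<dots> = Hc (r - 1 + of_nat m) + 1 / (r + of_nat m)"
    unfolding Hc_def by (simp add: algebra_simps)
  finally show ?thesis .
qed

lemma part1:
  fixes n :: nat and r :: complex
  assumes gd: "good r"
  shows "(\<Sum>k=1..n. (-1) ^ (k - 1) * of_nat (n choose k) / cbinom (of_nat k + r) r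
            * (harm k :: complex) ^ 2)
         = 1 / (of_nat n + r) * (Hc (of_nat n + r) - Hc r) * (r * Hc r - 1)
           + of_nat n / (of_nat n + r) ^ 2 * (Hc r - 1 / r)
           + r / (of_nat n + r) * harm n * Hc (of_nat n + r - 1)
           - r * (\<Sum>k=1..n. Hc (of_nat n - of_nat k + r - 1) / (of_nat k * (of_nat n - of_nat k + r)))"
proof -
  define K where "K m = Hc (r - 1 + of_nat m)" for m
  interpret Kseq r K
  proof
    show "good r" by (rule gd)
    fix m show "K (Suc m) = K m + 1 / (r + of_nat m)" unfolding K_def by (rule Hc_step[OF gd])
  qed
  have nr: "of_nat n + r \<noteq> 0" using good_nz'[OF gd] .
  have rz: "r \<noteq> 0" by (rule r_nz)
  have e1: "Hc (of_nat n + r) = K (Suc n)" unfolding K_def by (simp add: algebra_simps)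
  have e2: "Hc r = K 1" unfolding K_def by simp
  have e3: "Hc (of_nat n + r - 1) = K n" unfolding K_def by (simp add: algebra_simps)
  have e4: "(\<Sum>k=1..n. Hc (of_nat n - of_nat k + r - 1) / (of_nat k * (of_nat n - of_nat k + r)))
      = (Xa n + Xb n) / (of_nat n + r)"
  proof -
    have "(\<Sum>k=1..n. Hc (of_nat n - of_nat k + r - 1) / (of_nat k * (of_nat n - of_nat k + r)))
        = (\<Sum>k=1..n. (K (n - k) / of_nat k + K (n - k) / (of_nat (n - k) + r)) / (of_nat n + r))"
    proof (rule sum.cong[OF refl])
      fix k assume k: "k \<in> {1..n}"
      have c1: "of_nat n - of_nat k = (of_nat (n - k) :: complex)" using k by (simp add: of_nat_diff)
      have kz: "of_nat k \<noteq> (0::complex)" using k by simp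
      have mz: "of_nat (n - k) + r \<noteq> 0" using good_nz'[OF gd] .
      have e: "of_nat k + (of_nat (n - k) + r) = (of_nat n + r :: complex)"
        using k by (simp add: of_nat_diff algebra_simps)
      have "1 / (of_nat k * (of_nat (n - k) + r)) = (1 / of_nat k + 1 / (of_nat (n - k) + r)) / (of_nat n + r)"
        using pf[OF kz mz] nr unfolding e by simp
      then have "K (n - k) * (1 / (of_nat k * (of_nat (n - k) + r))) =
          K (n - k) * ((1 / of_nat k + 1 / (of_nat (n - k) + r)) / (of_nat n + r))" by simp
      then show "Hc (of_nat n - of_nat k + r - 1) / (of_nat k * (of_nat n - of_nat k + r)) =
          (K (n - k) / of_nat k + K (n - k) / (of_nat (n - k) + r)) / (of_nat n + r)"
        unfolding c1 K_def by (simp add: algebra_simps add_divide_distrib)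
    qed
    also have "\<dots> = (Xa n + Xb n) / (of_nat n + r)"
      unfolding Xa_def Xb_def by (simp only: sum_divide_distrib[symmetric] sum.distrib)
    finally show ?thesis .
  qed
  have L: "(\<Sum>k=1..n. (-1) ^ (k - 1) * of_nat (n choose k) / cbinom (of_nat k + r) r * (harm k :: complex) ^ 2)
     = - AA r (\<lambda>j. harm j ^ 2) n"
    unfolding cbinom_PP[OF gd] by (rule LHS_AA)
  define S where "S = 2 * AH r n + 2 * r * (\<Sum>m=1..n. AH r m / of_nat m) + uu r n + r * (\<Sum>m=1..n. uu r m / of_nat m)"
  have A6: "(of_nat n + r) * AA r (\<lambda>j. harm j ^ 2) n = S" unfolding S_def by (rule F6[OF gd])
  have EE: "- S = (K (Suc n) - K 1) * (r * K 1 - 1) + of_nat n / (of_nat n + r) * (K 1 - 1 / r)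
     + r * harm n * K n - r * (Xa n + Xb n)" unfolding S_def by (rule E)
  define e where "e = 1 / (of_nat n + r)"
  have he: "(of_nat n + r) * e = 1" unfolding e_def using nr by simp
  have Ae: "AA r (\<lambda>j. harm j ^ 2) n = S * e" using A6 nr unfolding e_def by (simp add: field_simps)
  define a where "a = 1 / r"
  have ha: "r * a = 1" unfolding a_def using rz by simp
  have fr: "of_nat n / (of_nat n + r) = of_nat n * e" "of_nat n / (of_nat n + r) ^ 2 = of_nat n * e * e"
    "1 / (of_nat n + r) = e" "r / (of_nat n + r) = r * e" "1 / r = a" "inverse (of_nat n + r) = e"
    unfolding e_def a_def by (simp_all add: divide_inverse power2_eq_square)
  have EE': "- S = (K (Suc n) - K 1) * (r * K 1 - 1) + of_nat n * e * (K 1 - a)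
     + r * harm n * K n - r * (Xa n + Xb n)" using EE unfolding fr .
  show ?thesis
    unfolding L e1 e2 e3 e4 Ae fr
    unfolding divide_inverse fr
    using EE' he ha
    by algebra
qed




lemma good_one: "good (1::real)"
  unfolding good_def by (auto simp: add_nonneg_eq_0_iff)

lemma PP_one: "PP (1::real) k = real k + 1"
proof (induction k)
  case 0 then show ?case by simp
next
  case (Suc k)
  have "PP (1::real) (Suc k) = (real k + 1) * (1 + real (Suc k)) / real (Suc k)"
    unfolding PP_Suc Suc ..
  also have "\<dots> = real (Suc k) + 1" by (simp add: field_simps)
  finally show ?case .
qed

lemma uu_one: "uu (1::real) m = harm (Suc m) - 1"
proof (induction m)
  case 0 then show ?case by (simp add: uu_def harm_expand)
next
  case (Suc m)
  have "uu (1::real) (Suc m) = uu 1 m + 1 / (real (Suc m) + 1)" by (simp add: uu_def)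
  then show ?case using Suc by (simp add: harm_Suc inverse_eq_divide add_ac)
qed

lemma step_poly2:
  fixes x Hn H2 c d :: real
  assumes "(x + 2) * c = 1" "(x + 1) * d = 1"
  shows "2 * ((- (x + 1) * c - (Hn + d + c - 1)) * c) - 2 * ((- x * d - (Hn + d - 1)) * d)
         + 2 * ((- (x + 1) * c - (Hn + d + c - 1)) * c) * d + c + (Hn + d + c - 1) * d
       = - (3 * (d * d) - ((Hn + d) * (Hn + d) - Hn * Hn)) / 2"
  using assms by algebra

lemma E_real:
  "2 * AH (1::real) n + 2 * 1 * (\<Sum>m=1..n. AH 1 m / of_nat m) + uu 1 n + 1 * (\<Sum>m=1..n. uu 1 m / of_nat m)
    = - (3 * harm2 n - harm n ^ 2) / 2"
proof (induction n)
  case 0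
  then show ?case by (simp add: AH_def uu_def harm2_def harm_expand(1))
next
  case (Suc n)
  define x where "x = real n"
  define c where "c = 1 / (x + 2)"
  define d where "d = 1 / (x + 1)"
  define SA where "SA = (\<Sum>m=1..n. AH (1::real) m / of_nat m)"
  define SU where "SU = (\<Sum>m=1..n. uu (1::real) m / of_nat m)"
  have x0: "x \<ge> 0" unfolding x_def by simp
  have hc: "(x + 2) * c = 1" unfolding c_def using x0 by simp
  have hd: "(x + 1) * d = 1" unfolding d_def using x0 by simp
  have sn: "real (Suc n) = x + 1" unfolding x_def by simp
  have HS: "harm (Suc n) = harm n + d" unfolding d_def x_def by (simp add: harm_Suc inverse_eq_divide add_ac)
  have HSS: "harm (Suc (Suc n)) = harm n + d + c"
    unfolding HS[symmetric] c_def x_def by (simp add: harm_Suc[of "Suc n"] inverse_eq_divide add_ac)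
  have uun: "uu (1::real) n = harm n + d - 1" using uu_one[of n] HS by simp
  have uuS: "uu (1::real) (Suc n) = harm n + d + c - 1" using uu_one[of "Suc n"] HSS by simp
  have AHn: "AH (1::real) n = (- x * d - uu 1 n) * d" unfolding AH_def d_def x_def
    by (simp add: divide_inverse add.commute)
  have AHS: "AH (1::real) (Suc n) = (- (x + 1) * c - uu 1 (Suc n)) * c"
    unfolding AH_def c_def sn by (simp add: divide_inverse add_ac)
  have SAS: "(\<Sum>m=1..Suc n. AH (1::real) m / of_nat m) = SA + AH 1 (Suc n) * d"
    unfolding SA_def d_def by (simp add: divide_inverse x_def)
  have SUS: "(\<Sum>m=1..Suc n. uu (1::real) m / of_nat m) = SU + uu 1 (Suc n) * d"
    unfolding SU_def d_def by (simp add: divide_inverse x_def)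
  have H2S: "harm2 (Suc n) = harm2 n + d * d"
    unfolding harm2_def d_def x_def by (simp add: power2_eq_square divide_inverse add_ac)
  have IH: "2 * AH (1::real) n + 2 * SA + uu 1 n + SU = - (3 * harm2 n - harm n ^ 2) / 2"
    using Suc.IH unfolding SA_def SU_def by simp
  have st: "2 * ((- (x + 1) * c - (harm n + d + c - 1)) * c) - 2 * ((- x * d - (harm n + d - 1)) * d)
         + 2 * ((- (x + 1) * c - (harm n + d + c - 1)) * c) * d + c + (harm n + d + c - 1) * d
       = - (3 * (d * d) - ((harm n + d) * (harm n + d) - harm n * harm n)) / 2"
    by (rule step_poly2[OF hc hd])
  show ?case
    unfolding SAS SUS HS H2S AHS uuS
    using IH st unfolding AHn uun power2_eq_square
    by algebra
qed

lemma part2: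
  "(\<Sum>k=1..n. (-1) ^ (k - 1) * real (n choose k) / (real k + 1) * (harm k :: real) ^ 2)
         = 1 / (2 * (real n + 1)) * (3 * harm2 n - (harm n) ^ 2)"
proof -
  have L: "(\<Sum>k=1..n. (-1) ^ (k - 1) * real (n choose k) / (real k + 1) * (harm k :: real) ^ 2)
      = - AA 1 (\<lambda>j. harm j ^ 2) n"
    using LHS_AA[of n "1::real"] unfolding PP_one by simp
  have A6: "(of_nat n + 1) * AA (1::real) (\<lambda>j. harm j ^ 2) n =
     2 * AH (1::real) n + 2 * 1 * (\<Sum>m=1..n. AH 1 m / of_nat m) + uu 1 n + 1 * (\<Sum>m=1..n. uu 1 m / of_nat m)"
    by (rule F6[OF good_one])
  have "(real n + 1) * AA (1::real) (\<lambda>j. harm j ^ 2) n = - (3 * harm2 n - harm n ^ 2) / 2"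
    using A6 E_real by simp
  then have "AA (1::real) (\<lambda>j. harm j ^ 2) n = - (3 * harm2 n - harm n ^ 2) / (2 * (real n + 1))"
    by (simp add: field_simps add_pos_nonneg)
  moreover have "2 * real n + 2 \<noteq> 0" by simp
  ultimately show ?thesis unfolding L by (simp add: field_simps)
qed


theorem corollary12:
  fixes n :: nat and r :: complex
  assumes "r \<notin> {- of_nat m | m. m \<ge> 1}" and "r \<noteq> 0"
  shows "((\<Sum>k=1..n. (-1) ^ (k - 1) * of_nat (n choose k) / cbinom (of_nat k + r) r
            * (harm k :: complex) ^ 2)
         = 1 / (of_nat n + r) * (Hc (of_nat n + r) - Hc r) * (r * Hc r - 1)
           + of_nat n / (of_nat n + r) ^ 2 * (Hc r - 1 / r)
           + r / (of_nat n + r) * harm n * Hc (of_nat n + r - 1)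
           - r * (\<Sum>k=1..n. Hc (of_nat n - of_nat k + r - 1) / (of_nat k * (of_nat n - of_nat k + r))))
    \<and> ((\<Sum>k=1..n. (-1) ^ (k - 1) * real (n choose k) / (real k + 1) * (harm k :: real) ^ 2)
         = 1 / (2 * (real n + 1)) * (3 * harm2 n - (harm n) ^ 2))"
proof -
  have gd: "good r" by (rule good_complex[OF assms])
  show ?thesis by (rule conjI[OF part1[OF gd] part2])
qed

end
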